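(* Let $n \ge 2$, let $\Omega \subset \mathbb{R}^n$ be an unbounded domain, let $f : \Omega \times [0,\infty) \to \mathbb{R}$, and let $u$ be a non-negative (viscosity) solution of the problem $\Delta_\infty u \ge f(x,u)$ in $\Omega$, $u|_{\partial\Omega} = 0$. Let $R > 0$, let $B_R$ be the open ball of radius $R$ centered at the origin, and let $\mathcal{F} : (B_R \cap \Omega) \times [0,\infty) \to \mathbb{R}$ be a function that is non-decreasing in its last argument and satisfies $\mathcal{F}(x,t) < f(x,t)$ for all $x \in B_R \cap \Omega$ and $t > 0$. Let $U \in C^2(B_R \cap \Omega) \cap C(\overline{B_R \cap \Omega})$ be non-negative on $B_R \cap \Omega$, satisfy classically $\Delta_\infty U \le \mathcal{F}(x,U)$ in $B_R \cap \Omega$, and satisfy $U \ge u$ on $\partial(B_R \cap \Omega)$. Then $U \ge u$ on $\overline{B_R \cap \Omega}$.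
   Context: The $\infty$-Laplacian is $\Delta_\infty u = \sum_{i,j=1}^n \frac{\partial^2 u}{\partial x_i \partial x_j}\frac{\partial u}{\partial x_i}\frac{\partial u}{\partial x_j}$. For $u:\Omega \to \mathbb{R}$ and $x \in \Omega$, the second-order superjet $J^{2,+}_\Omega u(x)$ is the set of pairs $(v,A)$ with $v \in \mathbb{R}^n$ and $A$ a symmetric $n\times n$ matrix such that $u(y) - u(x) \le \langle v, y-x\rangle + \frac12 \langle A(y-x), y-x\rangle + o(|y-x|^2)$ for all $y$ in some neighborhood of $x$. A function $u \ge 0$ on $\overline{\Omega}$ is a non-negative solution of the problem if $u$ is upper semicontinuous on $\overline{\Omega}$ (i.e. $\limsup_{y\to x} u(y) \le u(x)$ for every $x\in\overline\Omega$), $u = 0$ on $\partial\Omega$, and for every $x \in \Omega$ with $J^{2,+}_\Omega u(x) \ne \emptyset$ one has $\langle Av, v\rangle \ge f(x,u(x))$ for all $(v,A) \in J^{2,+}_\Omega u(x)$. If $\Omega = \mathbb{R}^n$, the boundary condition is void. *)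

theory Defs
  imports "HOL-Analysis.Analysis"
begin

definition superjet2 ::
  "(real^('n::finite)) set \<Rightarrow> (real^'n \<Rightarrow> real) \<Rightarrow> real^'n \<Rightarrow> ((real^'n) \<times> (real^'n^'n)) set" where
  "superjet2 \<Omega> u x =
     {(v, A). transpose A = A \<and>
        (\<forall>\<epsilon>>0. \<forall>\<^sub>F y in at x within \<Omega>.
            u y - u x \<le> v \<bullet> (y - x) + (1/2) * ((A *v (y - x)) \<bullet> (y - x)) + \<epsilon> * (norm (y - x))\<^sup>2)}"

definition usc_on :: "'a::topological_space set \<Rightarrow> ('a \<Rightarrow> real) \<Rightarrow> bool" where
  "usc_on S u \<longleftrightarrow> (\<forall>x\<in>S. \<forall>\<epsilon>>0. \<forall>\<^sub>F y in at x within S. u y < u x + \<epsilon>)"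

definition nonneg_solution ::
  "(real^'n::finite) set \<Rightarrow> (real^'n \<Rightarrow> real \<Rightarrow> real) \<Rightarrow> (real^'n \<Rightarrow> real) \<Rightarrow> bool" where
  "nonneg_solution \<Omega> f u \<longleftrightarrow>
     (\<forall>x\<in>closure \<Omega>. u x \<ge> 0) \<and>
     usc_on (closure \<Omega>) u \<and>
     (\<forall>x\<in>frontier \<Omega>. u x = 0) \<and>
     (\<forall>x\<in>\<Omega>. \<forall>v A. (v, A) \<in> superjet2 \<Omega> u x \<longrightarrow> (A *v v) \<bullet> v \<ge> f x (u x))"

definition C2_on :: "(real^'n::finite \<Rightarrow> real) \<Rightarrow> (real^'n) set \<Rightarrow> bool" where
  "C2_on U S \<longleftrightarrow>
     (\<exists>g H. (\<forall>x\<in>S. (U has_derivative (\<lambda>h. g x \<bullet> h)) (at x) \<and>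
                    (g has_derivative (\<lambda>h. H x *v h)) (at x)) \<and>
            continuous_on S H)"

definition grad :: "(real^'n::finite \<Rightarrow> real) \<Rightarrow> real^'n \<Rightarrow> real^'n" where
  "grad U x = (THE v. (U has_derivative (\<lambda>h. v \<bullet> h)) (at x))"

definition hess :: "(real^'n::finite \<Rightarrow> real) \<Rightarrow> real^'n \<Rightarrow> real^'n^'n" where
  "hess U x = (THE A. (grad U has_derivative (\<lambda>h. A *v h)) (at x))"

definition inf_laplacian :: "(real^'n::finite \<Rightarrow> real) \<Rightarrow> real^'n \<Rightarrow> real" where
  "inf_laplacian U x = (\<Sum>i\<in>UNIV. \<Sum>j\<in>UNIV. hess U x $ i $ j * grad U x $ i * grad U x $ j)"

end

theory Submission
  imports Defs
begin

lemma usc_max: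
  fixes h :: "'a::metric_space \<Rightarrow> real"
  assumes K: "compact K" "K \<noteq> {}"
    and usc: "\<forall>x\<in>K. \<forall>e>0. \<forall>\<^sub>F y in at x within K. h y < h x + e"
  shows "\<exists>x\<in>K. \<forall>y\<in>K. h y \<le> h x"
proof (rule ccontr)
  assume "\<not> ?thesis"
  then have "\<forall>x\<in>K. \<exists>y\<in>K. h x < h y" by (auto simp: not_le)
  then obtain yf where yf: "\<forall>x\<in>K. yf x \<in> K \<and> h x < h (yf x)" by metis
  have "\<forall>x\<in>K. \<exists>T. open T \<and> x \<in> T \<and> (\<forall>z\<in>T\<inter>K. h z < h (yf x))"
  proof
    fix x assume x: "x\<in>K"
    have "\<forall>\<^sub>F y in at x within K. h y < h x + (h (yf x) - h x)" using usc[rule_format, OF x, of "h (yf x) - h x"] yf x by simp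
    then have "\<forall>\<^sub>F y in at x within K. h y < h (yf x)" by simp
    then obtain T where "open T" "x\<in>T" "\<forall>z\<in>T. z \<noteq> x \<longrightarrow> z \<in> K \<longrightarrow> h z < h (yf x)"
      unfolding eventually_at_topological by auto
    then show "\<exists>T. open T \<and> x \<in> T \<and> (\<forall>z\<in>T\<inter>K. h z < h (yf x))"
      using yf x by (intro exI[of _ T]) auto
  qed
  then obtain Tf where Tf: "\<forall>x\<in>K. open (Tf x) \<and> x \<in> Tf x \<and> (\<forall>z\<in>Tf x \<inter> K. h z < h (yf x))"
    by metis
  have cov: "K \<subseteq> (\<Union>x\<in>K. Tf x)" using Tf by auto
  obtain C where C: "C \<subseteq> K" "finite C" "K \<subseteq> \<Union>(Tf ` C)"
    using compactE_image[OF K(1) _ cov] Tf by metis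
  then have Cne: "C \<noteq> {}" using K(2) by auto
  define m where "m = Max ((\<lambda>c. h (yf c)) ` C)"
  have "m \<in> (\<lambda>c. h (yf c)) ` C" unfolding m_def using C Cne by (intro Max_in) auto
  then obtain c where c: "c \<in> C" "m = h (yf c)" by auto
  have mge: "\<forall>c'\<in>C. h (yf c') \<le> m" unfolding m_def using C by auto
  have "yf c \<in> K" using yf c C by auto
  then obtain c' where c': "c' \<in> C" "yf c \<in> Tf c'" using C by auto
  then have "h (yf c) < h (yf c')" using Tf C \<open>yf c \<in> K\<close> by auto
  then show False using mge c c' by auto
qed

lemma taylor2:
  fixes U :: "real^'n \<Rightarrow> real" and g :: "real^'n \<Rightarrow> real^'n"
  assumes S: "open S" "x \<in> S"
   and dU: "\<forall>y\<in>S. (U has_derivative (\<lambda>h. g y \<bullet> h)) (at y)"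
   and dg: "(g has_derivative (\<lambda>h. H *v h)) (at x)"
   and e: "e > 0"
  shows "\<forall>\<^sub>F y in at x. U y - U x \<le> g x \<bullet> (y - x) + 1/2 * ((H *v (y - x)) \<bullet> (y - x)) + e * (norm (y - x))^2"
proof -
  obtain d1 where d1: "d1 > 0" "\<forall>y. norm (y - x) < d1 \<longrightarrow> norm (g y - g x - H *v (y - x)) \<le> e * norm (y - x)"
    using dg e unfolding has_derivative_within_alt by blast
  obtain d2 where d2: "d2 > 0" "ball x d2 \<subseteq> S" using S openE by blast
  define d where "d = min d1 d2"
  have "d > 0" using d1 d2 d_def by auto
  show ?thesis unfolding eventually_at
  proof (intro exI[of _ d] conjI ballI impI allI)
    show "d > 0" by fact
    fix y assume "y \<noteq> x \<and> dist y x < d"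
    then have yd: "norm (y - x) < d" by (simp add: dist_norm)
    define h where "h = y - x"
    define \<phi> where "\<phi> t = U (x + t *\<^sub>R h) - t * (g x \<bullet> h) - t^2/2 * ((H *v h) \<bullet> h)" for t
    define \<phi>' where "\<phi>' t = g (x + t *\<^sub>R h) \<bullet> h - g x \<bullet> h - t * ((H *v h) \<bullet> h)" for t
    have inball: "x + t *\<^sub>R h \<in> ball x d" if "0 \<le> t" "t \<le> 1" for t
    proof -
      have "norm (t *\<^sub>R h) \<le> norm h" using that by (simp add: mult_left_le_one_le)
      then show ?thesis using yd h_def by (simp add: dist_norm)
    qed
    have der: "(\<phi> has_real_derivative \<phi>' t) (at t)" if "0 \<le> t" "t \<le> 1" for t
    proof -
      have xS: "x + t *\<^sub>R h \<in> S" using inball[OF that] d2 d_def by auto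
      have l: "((\<lambda>s. x + s *\<^sub>R h) has_derivative (\<lambda>s. s *\<^sub>R h)) (at t)"
        by (auto intro!: derivative_eq_intros)
      have "((\<lambda>s. U (x + s *\<^sub>R h)) has_derivative (\<lambda>s. g (x + t *\<^sub>R h) \<bullet> (s *\<^sub>R h))) (at t)"
        using has_derivative_compose[OF l] dU xS by blast
      moreover have "(\<lambda>s. g (x + t *\<^sub>R h) \<bullet> (s *\<^sub>R h)) = (*) (g (x + t *\<^sub>R h) \<bullet> h)"
        by (rule ext) simp
      ultimately have "((\<lambda>s. U (x + s *\<^sub>R h)) has_real_derivative (g (x + t *\<^sub>R h) \<bullet> h)) (at t)"
        unfolding has_field_derivative_def by simp
      then show ?thesis unfolding \<phi>_def[abs_def] \<phi>'_def
        by (auto intro!: derivative_eq_intros)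
    qed
    obtain z where z: "0 < z" "z < 1" "\<phi> 1 - \<phi> 0 = (1 - 0) * \<phi>' z"
      using MVT2[of 0 1 \<phi> \<phi>'] der by auto
    have "\<phi>' z = (g (x + z *\<^sub>R h) - g x - H *v (z *\<^sub>R h)) \<bullet> h"
      unfolding \<phi>'_def by (simp add: matrix_vector_mult_scaleR inner_diff_left)
    also have "\<dots> \<le> norm (g (x + z *\<^sub>R h) - g x - H *v (z *\<^sub>R h)) * norm h"
      by (rule norm_cauchy_schwarz)
    also have "\<dots> \<le> (e * norm (z *\<^sub>R h)) * norm h"
    proof (rule mult_right_mono)
      have "norm ((x + z *\<^sub>R h) - x) < d1" using inball[of z] z d_def by (auto simp: dist_norm)
      then show "norm (g (x + z *\<^sub>R h) - g x - H *v (z *\<^sub>R h)) \<le> e * norm (z *\<^sub>R h)"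
        using d1(2)[rule_format, of "x + z *\<^sub>R h"] by simp
    qed simp
    also have "\<dots> \<le> e * (norm h)^2"
      using z e by (simp add: power2_eq_square mult_left_le_one_le mult.assoc mult_le_cancel_left1)
    finally have "\<phi> 1 - \<phi> 0 \<le> e * (norm h)^2" using z by simp
    then show "U y - U x \<le> g x \<bullet> (y - x) + 1/2 * ((H *v (y - x)) \<bullet> (y - x)) + e * (norm (y - x))^2"
      unfolding \<phi>_def h_def by simp
  qed
qed

lemma quadform:
  fixes M :: "real^'n^'n" and h :: "real^'n"
  shows "(M *v h) \<bullet> h = (\<Sum>i\<in>UNIV. \<Sum>j\<in>UNIV. M $ i $ j * h $ j * h $ i)"
  by (simp add: matrix_vector_mult_def inner_vec_def sum_distrib_right)

lemma quadform_sym: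
  fixes M :: "real^'n^'n" and h :: "real^'n"
  shows "((\<chi> i j. (M $ i $ j + M $ j $ i) / 2) *v h) \<bullet> h = (M *v h) \<bullet> h"
proof -
  have "((\<chi> i j. (M $ i $ j + M $ j $ i) / 2) *v h) \<bullet> h
     = (\<Sum>i\<in>UNIV. \<Sum>j\<in>UNIV. M $ i $ j * h $ j * h $ i) / 2 + (\<Sum>i\<in>UNIV. \<Sum>j\<in>UNIV. M $ j $ i * h $ j * h $ i) / 2"
    unfolding quadform by (simp add: sum_divide_distrib sum.distrib algebra_simps add_divide_distrib)
  also have "(\<Sum>i\<in>UNIV. \<Sum>j\<in>UNIV. M $ j $ i * h $ j * h $ i) = (\<Sum>i\<in>UNIV. \<Sum>j\<in>UNIV. M $ i $ j * h $ j * h $ i)"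
    by (subst sum.swap) (simp add: algebra_simps)
  finally show ?thesis unfolding quadform by simp
qed

lemma inf_lap_eq:
  "inf_laplacian U x = (hess U x *v grad U x) \<bullet> grad U x"
  unfolding inf_laplacian_def quadform by (simp add: algebra_simps)

lemma grad_eq:
  fixes U :: "real^'n \<Rightarrow> real"
  assumes "(U has_derivative (\<lambda>h. v \<bullet> h)) (at x)"
  shows "grad U x = v"
  unfolding grad_def
proof (rule the_equality)
  fix w assume "(U has_derivative (\<lambda>h. w \<bullet> h)) (at x)"
  then have "(\<lambda>h. w \<bullet> h) = (\<lambda>h. v \<bullet> h)" using has_derivative_unique assms by blast
  then have "w \<bullet> (w - v) = v \<bullet> (w - v)" by metis
  then have "(w - v) \<bullet> (w - v) = 0" by (simp add: inner_diff_left)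
  then show "w = v" by simp
qed (rule assms)

lemma hess_eq:
  fixes U :: "real^'n \<Rightarrow> real"
  assumes "(grad U has_derivative (\<lambda>h. A *v h)) (at x)"
  shows "hess U x = A"
  unfolding hess_def
proof (rule the_equality)
  fix B assume "(grad U has_derivative (\<lambda>h. B *v h)) (at x)"
  then have "(\<lambda>h. B *v h) = (\<lambda>h. A *v h)" using has_derivative_unique assms by blast
  then show "B = A" by (metis matrix_eq)
qed (rule assms)

theorem lemma8:
  fixes \<Omega> :: "(real^'n) set"
    and f F :: "real^'n \<Rightarrow> real \<Rightarrow> real"
    and u U :: "real^'n \<Rightarrow> real"
    and R :: real
  assumes n2: "CARD('n) \<ge> 2"
    and dom: "open \<Omega>" "connected \<Omega>" "\<Omega> \<noteq> {}"
    and unb: "\<not> bounded \<Omega>"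
    and sol: "nonneg_solution \<Omega> f u"
    and R: "R > 0"
    and F_mono: "\<forall>x\<in>ball 0 R \<inter> \<Omega>. \<forall>s t. 0 \<le> s \<longrightarrow> s \<le> t \<longrightarrow> F x s \<le> F x t"
    and F_less: "\<forall>x\<in>ball 0 R \<inter> \<Omega>. \<forall>t>0. F x t < f x t"
    and U_C2: "C2_on U (ball 0 R \<inter> \<Omega>)"
    and U_cont: "continuous_on (closure (ball 0 R \<inter> \<Omega>)) U"
    and U_nonneg: "\<forall>x\<in>ball 0 R \<inter> \<Omega>. U x \<ge> 0"
    and U_super: "\<forall>x\<in>ball 0 R \<inter> \<Omega>. inf_laplacian U x \<le> F x (U x)"
    and U_bdry: "\<forall>x\<in>frontier (ball 0 R \<inter> \<Omega>). U x \<ge> u x"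
  shows "\<forall>x\<in>closure (ball 0 R \<inter> \<Omega>). U x \<ge> u x"
  proof (rule ccontr)
  assume "\<not> (\<forall>x\<in>closure (ball 0 R \<inter> \<Omega>). U x \<ge> u x)"
  then obtain x1 where x1: "x1 \<in> closure (ball 0 R \<inter> \<Omega>)" "u x1 > U x1" by (auto simp: not_le)
  define D where "D = ball 0 R \<inter> \<Omega>"
  define K where "K = closure D"
  have openD: "open D" unfolding D_def using dom(1) by auto
  have KO: "K \<subseteq> closure \<Omega>" unfolding K_def D_def by (rule closure_mono) auto
  have cK: "compact K" unfolding K_def compact_closure D_def
    by (rule bounded_subset[of "ball 0 R"]) auto
  obtain g H where gH: "\<forall>x\<in>D. (U has_derivative (\<lambda>h. g x \<bullet> h)) (at x) \<and>
                    (g has_derivative (\<lambda>h. H x *v h)) (at x)"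
    using U_C2 unfolding C2_on_def D_def by blast
  have uusc: "usc_on (closure \<Omega>) u" using sol unfolding nonneg_solution_def by blast
  have usc: "\<forall>x\<in>K. \<forall>e>0. \<forall>\<^sub>F y in at x within K. u y - U y < (u x - U x) + e"
  proof (intro ballI allI impI)
    fix x e assume x: "x \<in> K" and e: "(e::real) > 0"
    have "\<forall>\<^sub>F y in at x within closure \<Omega>. u y < u x + e/2"
      using uusc x KO e unfolding usc_on_def by auto
    then have a: "\<forall>\<^sub>F y in at x within K. u y < u x + e/2"
      using filter_leD[OF at_le[OF KO]] by blast
    have "(U \<longlongrightarrow> U x) (at x within K)" using U_cont x unfolding K_def D_def continuous_on_def by blast
    moreover have "U x - e/2 < U x" using e by simp
    ultimately have b: "\<forall>\<^sub>F y in at x within K. U x - e/2 < U y"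
      by (rule order_tendstoD(1))
    show "\<forall>\<^sub>F y in at x within K. u y - U y < (u x - U x) + e"
      using eventually_conj[OF a b] by eventually_elim simp
  qed
  have Kne: "K \<noteq> {}" using x1 unfolding K_def D_def by auto
  obtain x0 where x0: "x0 \<in> K" "\<forall>y\<in>K. u y - U y \<le> u x0 - U x0"
    using usc_max[OF cK Kne usc] by blast
  have "u x1 - U x1 \<le> u x0 - U x0" using x0(2) x1(1) unfolding K_def D_def by blast
  then have pos: "u x0 - U x0 > 0" using x1(2) by linarith
  have x0D: "x0 \<in> D"
  proof (rule ccontr)
    assume "x0 \<notin> D"
    then have "x0 \<in> frontier D" using x0 interior_open[OF openD] unfolding K_def frontier_def by auto
    then have "U x0 \<ge> u x0" using U_bdry unfolding D_def by blast
    then show False using pos by linarith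
  qed
  have Ux0: "U x0 \<ge> 0" using U_nonneg x0D unfolding D_def by auto
  have gr: "grad U x0 = g x0" by (rule grad_eq) (use gH x0D in blast)
  have "(grad U has_derivative (\<lambda>h. H x0 *v h)) (at x0)"
  proof (rule has_derivative_transform_within_open[OF _ openD x0D])
    show "(g has_derivative (*v) (H x0)) (at x0)" using gH x0D by blast
    fix y assume "y \<in> D" then show "g y = grad U y" proof -
      assume "y \<in> D" then have "grad U y = g y" by (intro grad_eq) (use gH in blast)
      then show ?thesis by simp
    qed
  qed
  then have hs: "hess U x0 = H x0" by (rule hess_eq)
  define A where "A = (\<chi> i j. (H x0 $ i $ j + H x0 $ j $ i) / 2)"
  have symA: "transpose A = A" unfolding A_def transpose_def by (simp add: vec_eq_iff)
  have "(g x0, A) \<in> superjet2 \<Omega> u x0"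
    unfolding superjet2_def
  proof (simp only: mem_Collect_eq case_prod_conv, intro conjI symA allI impI)
    fix e :: real assume e: "e > 0"
    have t: "\<forall>\<^sub>F y in at x0. U y - U x0 \<le> g x0 \<bullet> (y - x0) + 1/2 * ((H x0 *v (y - x0)) \<bullet> (y - x0)) + e * (norm (y - x0))^2"
      using taylor2[OF openD x0D _ _ e, of U g "H x0"] gH x0D by blast
    have inD: "\<forall>\<^sub>F y in at x0. y \<in> D" using eventually_at_in_open'[OF openD x0D] .
    have "\<forall>\<^sub>F y in at x0. u y - u x0 \<le> g x0 \<bullet> (y - x0) + 1/2 * ((A *v (y - x0)) \<bullet> (y - x0)) + e * (norm (y - x0))^2"
      using eventually_conj[OF t inD]
    proof eventually_elim
      case (elim y)
      then have "y \<in> K" unfolding K_def using closure_subset by blast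
      then have "u y - U y \<le> u x0 - U x0" using x0(2) by blast
      then have "u y - u x0 \<le> U y - U x0" by linarith
      then show ?case using elim unfolding A_def quadform_sym by linarith
    qed
    then show "\<forall>\<^sub>F y in at x0 within \<Omega>. u y - u x0 \<le> g x0 \<bullet> (y - x0) + 1/2 * ((A *v (y - x0)) \<bullet> (y - x0)) + e * (norm (y - x0))^2"
      using filter_leD[OF at_le[of \<Omega> UNIV]] by blast
  qed
  moreover have "x0 \<in> \<Omega>" using x0D unfolding D_def by auto
  moreover have "\<forall>x\<in>\<Omega>. \<forall>v A. (v, A) \<in> superjet2 \<Omega> u x \<longrightarrow> (A *v v) \<bullet> v \<ge> f x (u x)"
    using sol unfolding nonneg_solution_def by (elim conjE)
  ultimately have fx: "(A *v g x0) \<bullet> g x0 \<ge> f x0 (u x0)" by blast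
  have "(A *v g x0) \<bullet> g x0 = inf_laplacian U x0"
    unfolding inf_lap_eq gr hs A_def quadform_sym ..
  also have "\<dots> \<le> F x0 (U x0)" using U_super x0D unfolding D_def by auto
  also have "\<dots> \<le> F x0 (u x0)" using F_mono x0D Ux0 pos unfolding D_def by auto
  also have "\<dots> < f x0 (u x0)" using F_less x0D Ux0 pos unfolding D_def by auto
  finally show False using fx by simp
qed

end
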